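(* Let $G$ be a finitely generated group which is not nilpotent. Then there exists $a\in G$ such that the normal subgroup of $G$ generated by $a$ is not nilpotent. *)

theory Defs
  imports "HOL-Algebra.Algebra"
begin

definition commutator_subgroup :: "('a, 'b) monoid_scheme \<Rightarrow> 'a set \<Rightarrow> 'a set \<Rightarrow> 'a set" where
  "commutator_subgroup G A B =
     generate G {a \<otimes>\<^bsub>G\<^esub> b \<otimes>\<^bsub>G\<^esub> inv\<^bsub>G\<^esub> a \<otimes>\<^bsub>G\<^esub> inv\<^bsub>G\<^esub> b | a b. a \<in> A \<and> b \<in> B}"

fun lower_central :: "('a, 'b) monoid_scheme \<Rightarrow> nat \<Rightarrow> 'a set" where
  "lower_central G 0 = carrier G"
| "lower_central G (Suc n) = commutator_subgroup G (carrier G) (lower_central G n)"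

definition nilpotent_group :: "('a, 'b) monoid_scheme \<Rightarrow> bool" where
  "nilpotent_group G \<longleftrightarrow> group G \<and> (\<exists>n. lower_central G n = {\<one>\<^bsub>G\<^esub>})"

definition finitely_generated_group :: "('a, 'b) monoid_scheme \<Rightarrow> bool" where
  "finitely_generated_group G \<longleftrightarrow>
     (\<exists>S. finite S \<and> S \<subseteq> carrier G \<and> generate G S = carrier G)"

definition normal_closure :: "('a, 'b) monoid_scheme \<Rightarrow> 'a \<Rightarrow> 'a set" where
  "normal_closure G a = generate G {g \<otimes>\<^bsub>G\<^esub> a \<otimes>\<^bsub>G\<^esub> inv\<^bsub>G\<^esub> g | g. g \<in> carrier G}"

end

theory Submission
  imports Defs
begin

definition gcomm :: "('a, 'b) monoid_scheme \<Rightarrow> 'a \<Rightarrow> 'a \<Rightarrow> 'a" where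
  "gcomm G x y = x \<otimes>\<^bsub>G\<^esub> y \<otimes>\<^bsub>G\<^esub> inv\<^bsub>G\<^esub> x \<otimes>\<^bsub>G\<^esub> inv\<^bsub>G\<^esub> y"

definition ccl :: "('a, 'b) monoid_scheme \<Rightarrow> 'a set \<Rightarrow> bool" where
  "ccl G Y = (\<forall>g y. g \<in> carrier G \<longrightarrow> y \<in> Y \<longrightarrow> g \<otimes>\<^bsub>G\<^esub> y \<otimes>\<^bsub>G\<^esub> inv\<^bsub>G\<^esub> g \<in> Y)"

fun lc :: "('a, 'b) monoid_scheme \<Rightarrow> 'a set \<Rightarrow> nat \<Rightarrow> 'a set" where
  "lc G H 0 = H"
| "lc G H (Suc n) = commutator_subgroup G H (lc G H n)"

lemma cs_alt: "commutator_subgroup G A B = generate G {gcomm G a b | a b. a \<in> A \<and> b \<in> B}"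
  unfolding commutator_subgroup_def gcomm_def by simp

context group
begin

lemma icl1: "x \<in> carrier G \<Longrightarrow> z \<in> carrier G \<Longrightarrow> inv x \<otimes> (x \<otimes> z) = z"
  by (simp add: m_assoc[symmetric])
lemma icl2: "x \<in> carrier G \<Longrightarrow> z \<in> carrier G \<Longrightarrow> x \<otimes> (inv x \<otimes> z) = z"
  by (simp add: m_assoc[symmetric])

lemmas gsimps = m_assoc inv_mult_group icl1 icl2

lemma gcomm_carrier[simp]: "x \<in> carrier G \<Longrightarrow> y \<in> carrier G \<Longrightarrow> gcomm G x y \<in> carrier G"
  by (simp add: gcomm_def)

lemma c_mult1: "x1 \<in> carrier G \<Longrightarrow> x2 \<in> carrier G \<Longrightarrow> y \<in> carrier G \<Longrightarrow>
  gcomm G (x1 \<otimes> x2) y = (x1 \<otimes> gcomm G x2 y \<otimes> inv x1) \<otimes> gcomm G x1 y"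
  by (simp add: gcomm_def gsimps)

lemma c_inv1: "x \<in> carrier G \<Longrightarrow> y \<in> carrier G \<Longrightarrow>
  gcomm G (inv x) y = inv x \<otimes> inv (gcomm G x y) \<otimes> inv (inv x)"
  by (simp add: gcomm_def gsimps)

lemma c_mult2: "x \<in> carrier G \<Longrightarrow> y1 \<in> carrier G \<Longrightarrow> y2 \<in> carrier G \<Longrightarrow>
  gcomm G x (y1 \<otimes> y2) = gcomm G x y1 \<otimes> (y1 \<otimes> gcomm G x y2 \<otimes> inv y1)"
  by (simp add: gcomm_def gsimps)

lemma c_inv2: "x \<in> carrier G \<Longrightarrow> y \<in> carrier G \<Longrightarrow>
  gcomm G x (inv y) = inv y \<otimes> inv (gcomm G x y) \<otimes> inv (inv y)"
  by (simp add: gcomm_def gsimps)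

lemma c_one1: "y \<in> carrier G \<Longrightarrow> gcomm G \<one> y = \<one>"
  by (simp add: gcomm_def gsimps)
lemma c_one2: "x \<in> carrier G \<Longrightarrow> gcomm G x \<one> = \<one>"
  by (simp add: gcomm_def gsimps)

lemma c_conj: "g \<in> carrier G \<Longrightarrow> x \<in> carrier G \<Longrightarrow> y \<in> carrier G \<Longrightarrow>
  g \<otimes> gcomm G x y \<otimes> inv g = gcomm G (g \<otimes> x \<otimes> inv g) (g \<otimes> y \<otimes> inv g)"
  by (simp add: gcomm_def gsimps)


lemma ccl_carrier: "ccl G (carrier G)"
  by (simp add: ccl_def)

lemma generate_ccl:
  assumes "Y \<subseteq> carrier G" "ccl G Y" shows "ccl G (generate G Y)"
  unfolding ccl_def
proof (intro allI impI)
  fix g y assume g: "g \<in> carrier G" and y: "y \<in> generate G Y"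
  from y show "g \<otimes> y \<otimes> inv g \<in> generate G Y"
  proof induction
    case one then show ?case using g by (simp add: generate.one)
  next
    case (incl h) then show ?case using assms g unfolding ccl_def by (blast intro: generate.incl)
  next
    case (inv h)
    have hc: "h \<in> carrier G" using inv assms by auto
    have "g \<otimes> inv h \<otimes> inv g = inv (g \<otimes> h \<otimes> inv g)" using g hc by (simp add: gsimps)
    moreover have "g \<otimes> h \<otimes> inv g \<in> Y" using assms g inv unfolding ccl_def by blast
    ultimately show ?case by (simp add: generate.inv)
  next
    case (eng h1 h2)
    have c1: "h1 \<in> carrier G" "h2 \<in> carrier G" using eng generate_in_carrier assms by auto
    have "g \<otimes> (h1 \<otimes> h2) \<otimes> inv g = (g \<otimes> h1 \<otimes> inv g) \<otimes> (g \<otimes> h2 \<otimes> inv g)"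
      using g c1 by (simp add: gsimps)
    then show ?case using eng by (simp add: generate.eng)
  qed
qed

lemma gen_first:
  assumes W: "subgroup W G" "ccl G W" and y: "y \<in> carrier G" and Y: "Y \<subseteq> carrier G"
    and h: "\<And>x. x \<in> Y \<Longrightarrow> gcomm G x y \<in> W" and x: "x \<in> generate G Y"
  shows "gcomm G x y \<in> W"
  using x
proof induction
  case one then show ?case using y W by (simp add: c_one1 subgroup.one_closed)
next
  case (incl h) then show ?case by (rule h)
next
  case (inv h)
  have hc: "h \<in> carrier G" using inv Y by auto
  have "inv (gcomm G h y) \<in> W" using h[OF inv] W by (simp add: subgroup.m_inv_closed)
  then have "inv h \<otimes> inv (gcomm G h y) \<otimes> inv (inv h) \<in> W"
    using W(2) \<open>inv (gcomm G _ _) \<in> W\<close> hc unfolding ccl_def by (meson inv_closed)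
  then show ?case using hc y by (simp add: c_inv1)
next
  case (eng h1 h2)
  have c1: "h1 \<in> carrier G" "h2 \<in> carrier G" using eng generate_in_carrier Y by auto
  have "h1 \<otimes> gcomm G h2 y \<otimes> inv h1 \<in> W" using eng W c1 unfolding ccl_def by simp
  then show ?case using c1 y eng W by (simp add: c_mult1 subgroup.m_closed)
qed

lemma gen_second:
  assumes W: "subgroup W G" "ccl G W" and x: "x \<in> carrier G" and Y: "Y \<subseteq> carrier G"
    and h: "\<And>y. y \<in> Y \<Longrightarrow> gcomm G x y \<in> W" and y: "y \<in> generate G Y"
  shows "gcomm G x y \<in> W"
  using y
proof induction
  case one then show ?case using x W by (simp add: c_one2 subgroup.one_closed)
next
  case (incl h) then show ?case by (rule h)
next
  case (inv h)
  have hc: "h \<in> carrier G" using inv Y by auto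
  have "inv (gcomm G x h) \<in> W" using h[OF inv] W by (simp add: subgroup.m_inv_closed)
  then have "inv h \<otimes> inv (gcomm G x h) \<otimes> inv (inv h) \<in> W"
    using W(2) \<open>inv (gcomm G _ _) \<in> W\<close> hc unfolding ccl_def by (meson inv_closed)
  then show ?case using hc x by (simp add: c_inv2)
next
  case (eng h1 h2)
  have c1: "h1 \<in> carrier G" "h2 \<in> carrier G" using eng generate_in_carrier Y by auto
  have "h1 \<otimes> gcomm G x h2 \<otimes> inv h1 \<in> W" using eng W c1 unfolding ccl_def by simp
  then show ?case using c1 x eng W by (simp add: c_mult2 subgroup.m_closed)
qed

lemma cs_subgroup:
  assumes "A \<subseteq> carrier G" "B \<subseteq> carrier G"
  shows "subgroup (commutator_subgroup G A B) G"
  unfolding cs_alt using assms by (intro generate_is_subgroup) (blast intro: gcomm_carrier)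

lemma lc_subgroup:
  assumes "subgroup H G" shows "subgroup (lc G H n) G"
proof (induction n)
  case 0 then show ?case using assms by simp
next
  case (Suc n) then show ?case using assms
    by (simp add: cs_subgroup subgroup.subset)
qed

lemma lc_sub: "subgroup H G \<Longrightarrow> lc G H n \<subseteq> carrier G"
  using lc_subgroup subgroup.subset by blast

lemma lc_ccl:
  assumes "subgroup H G" "ccl G H" shows "ccl G (lc G H n)"
proof (induction n)
  case 0 then show ?case using assms by simp
next
  case (Suc n)
  let ?Y = "{gcomm G a b | a b. a \<in> H \<and> b \<in> lc G H n}"
  have Y: "?Y \<subseteq> carrier G" using lc_sub[OF assms(1)] subgroup.subset[OF assms(1)] by (blast intro: gcomm_carrier)
  have "ccl G ?Y" unfolding ccl_def
  proof (intro allI impI)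
    fix g y assume g: "g \<in> carrier G" and "y \<in> ?Y"
    then obtain a b where ab: "y = gcomm G a b" "a \<in> H" "b \<in> lc G H n" by blast
    have c: "a \<in> carrier G" "b \<in> carrier G" using ab lc_sub[OF assms(1)] subgroup.subset[OF assms(1)] by auto
    have "g \<otimes> y \<otimes> inv g = gcomm G (g \<otimes> a \<otimes> inv g) (g \<otimes> b \<otimes> inv g)"
      using ab c g by (simp add: c_conj)
    moreover have "g \<otimes> a \<otimes> inv g \<in> H" using assms(2) g ab unfolding ccl_def by blast
    moreover have "g \<otimes> b \<otimes> inv g \<in> lc G H n" using Suc g ab unfolding ccl_def by blast
    ultimately show "g \<otimes> y \<otimes> inv g \<in> ?Y" by blast
  qed
  then show ?case using generate_ccl[OF Y] by (simp add: cs_alt)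
qed

lemma lc_in_H:
  assumes "subgroup H G" shows "lc G H n \<subseteq> H"
proof (induction n)
  case 0 then show ?case by simp
next
  case (Suc n)
  have "{gcomm G a b | a b. a \<in> H \<and> b \<in> lc G H n} \<subseteq> H"
    using Suc assms by (auto simp: gcomm_def subgroup.m_closed subgroup.m_inv_closed)
  then show ?case using generate_subgroup_incl[OF _ assms] by (simp add: cs_alt)
qed

lemma lc_consistent:
  assumes "subgroup H G" shows "lower_central (G\<lparr>carrier := H\<rparr>) n = lc G H n"
proof (induction n)
  case 0 then show ?case by simp
next
  case (Suc n)
  have sub: "lc G H n \<subseteq> H" by (rule lc_in_H[OF assms])
  have eq: "{a \<otimes>\<^bsub>G\<lparr>carrier := H\<rparr>\<^esub> b \<otimes>\<^bsub>G\<lparr>carrier := H\<rparr>\<^esub> inv\<^bsub>G\<lparr>carrier := H\<rparr>\<^esub> a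
       \<otimes>\<^bsub>G\<lparr>carrier := H\<rparr>\<^esub> inv\<^bsub>G\<lparr>carrier := H\<rparr>\<^esub> b | a b. a \<in> H \<and> b \<in> lc G H n}
     = {gcomm G a b | a b. a \<in> H \<and> b \<in> lc G H n}"
  proof -
    have "\<And>b. b \<in> lc G H n \<Longrightarrow> inv\<^bsub>G\<lparr>carrier := H\<rparr>\<^esub> b = inv b"
      using sub assms by auto
    note ib = this
    show ?thesis
    proof (intro equalityI subsetI)
      fix z assume "z \<in> {a \<otimes>\<^bsub>G\<lparr>carrier := H\<rparr>\<^esub> b \<otimes>\<^bsub>G\<lparr>carrier := H\<rparr>\<^esub> inv\<^bsub>G\<lparr>carrier := H\<rparr>\<^esub> a
       \<otimes>\<^bsub>G\<lparr>carrier := H\<rparr>\<^esub> inv\<^bsub>G\<lparr>carrier := H\<rparr>\<^esub> b | a b. a \<in> H \<and> b \<in> lc G H n}"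
      then obtain a b where ab: "a \<in> H" "b \<in> lc G H n" and
        z: "z = a \<otimes>\<^bsub>G\<lparr>carrier := H\<rparr>\<^esub> b \<otimes>\<^bsub>G\<lparr>carrier := H\<rparr>\<^esub> inv\<^bsub>G\<lparr>carrier := H\<rparr>\<^esub> a
       \<otimes>\<^bsub>G\<lparr>carrier := H\<rparr>\<^esub> inv\<^bsub>G\<lparr>carrier := H\<rparr>\<^esub> b" by blast
      have "z = gcomm G a b" using z ab ib assms by (simp add: gcomm_def)
      then show "z \<in> {gcomm G a b | a b. a \<in> H \<and> b \<in> lc G H n}" using ab by blast
    next
      fix z assume "z \<in> {gcomm G a b | a b. a \<in> H \<and> b \<in> lc G H n}"
      then obtain a b where ab: "a \<in> H" "b \<in> lc G H n" and z: "z = gcomm G a b" by blast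
      have "z = a \<otimes>\<^bsub>G\<lparr>carrier := H\<rparr>\<^esub> b \<otimes>\<^bsub>G\<lparr>carrier := H\<rparr>\<^esub> inv\<^bsub>G\<lparr>carrier := H\<rparr>\<^esub> a
       \<otimes>\<^bsub>G\<lparr>carrier := H\<rparr>\<^esub> inv\<^bsub>G\<lparr>carrier := H\<rparr>\<^esub> b" using z ab ib assms by (simp add: gcomm_def)
      then show "z \<in> {a \<otimes>\<^bsub>G\<lparr>carrier := H\<rparr>\<^esub> b \<otimes>\<^bsub>G\<lparr>carrier := H\<rparr>\<^esub> inv\<^bsub>G\<lparr>carrier := H\<rparr>\<^esub> a
       \<otimes>\<^bsub>G\<lparr>carrier := H\<rparr>\<^esub> inv\<^bsub>G\<lparr>carrier := H\<rparr>\<^esub> b | a b. a \<in> H \<and> b \<in> lc G H n}" using ab by blast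
    qed
  qed
  have Ysub: "{gcomm G a b | a b. a \<in> H \<and> b \<in> lc G H n} \<subseteq> H"
    using sub assms by (auto simp: gcomm_def subgroup.m_closed subgroup.m_inv_closed)
  have "lower_central (G\<lparr>carrier := H\<rparr>) (Suc n) = commutator_subgroup (G\<lparr>carrier := H\<rparr>) H (lc G H n)"
    using Suc by simp
  also have "\<dots> = generate (G\<lparr>carrier := H\<rparr>) {gcomm G a b | a b. a \<in> H \<and> b \<in> lc G H n}"
    by (simp only: commutator_subgroup_def eq)
  also have "\<dots> = lc G H (Suc n)"
    using generate_consistent[OF Ysub assms] by (simp add: cs_alt)
  finally show ?case .
qed


lemma generate_one: "generate G {\<one>} = {\<one>}"
  using generate_subgroup_incl[OF _ triv_subgroup, of "{\<one>}"] generate.one[of G "{\<one>}"] by auto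

lemma generate_empty: "generate G {} = {\<one>}"
  using generate_subgroup_incl[OF _ triv_subgroup, of "{}"] generate.one[of G "{}"] by auto

lemma lc_triv:
  assumes "subgroup H G" "lc G H c = {\<one>}" "c \<le> n" shows "lc G H n = {\<one>}"
  using assms(3)
proof (induction n rule: dec_induct)
  case base then show ?case using assms by simp
next
  case (step n)
  have "{gcomm G a b | a b. a \<in> H \<and> b \<in> lc G H n} = {\<one>}"
  proof (intro equalityI subsetI)
    fix z assume "z \<in> {gcomm G a b | a b. a \<in> H \<and> b \<in> lc G H n}"
    then show "z \<in> {\<one>}" using step subgroup.subset[OF assms(1)] by (auto simp: c_one2)
  next
    fix z assume "z \<in> {\<one>}"
    then have "z = gcomm G \<one> \<one>" by (simp add: c_one2)
    then show "z \<in> {gcomm G a b | a b. a \<in> H \<and> b \<in> lc G H n}"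
      using step subgroup.one_closed[OF assms(1)] by auto
  qed
  then show ?case by (simp add: cs_alt generate_one)
qed

lemma fitting:
  assumes M: "subgroup M G" "ccl G M" and N: "subgroup N G" "ccl G N"
    and cM: "lc G M c = {\<one>}" and dN: "lc G N d = {\<one>}"
  shows "\<exists>n. lc G (generate G (M \<union> N)) n = {\<one>}"
proof -
  define A where "A i = (case i of 0 \<Rightarrow> carrier G | Suc j \<Rightarrow> lc G M j)" for i
  define B where "B i = (case i of 0 \<Rightarrow> carrier G | Suc j \<Rightarrow> lc G N j)" for i
  have A_sg: "subgroup (A i) G" for i
    by (cases i) (auto simp: A_def subgroup_self lc_subgroup M)
  have B_sg: "subgroup (B i) G" for i
    by (cases i) (auto simp: B_def subgroup_self lc_subgroup N)
  have A_cc: "ccl G (A i)" for i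
    by (cases i) (auto simp: A_def ccl_carrier lc_ccl M)
  have B_cc: "ccl G (B i)" for i
    by (cases i) (auto simp: B_def ccl_carrier lc_ccl N)
  have A_c: "A i \<subseteq> carrier G" for i using A_sg subgroup.subset by blast
  have B_c: "B i \<subseteq> carrier G" for i using B_sg subgroup.subset by blast
  have any_A: "gcomm G x y \<in> A i" if "x \<in> carrier G" "y \<in> A i" for x y i
  proof -
    have "x \<otimes> y \<otimes> inv x \<in> A i" using A_cc that unfolding ccl_def by blast
    moreover have "inv y \<in> A i" using A_sg that by (simp add: subgroup.m_inv_closed)
    ultimately show ?thesis unfolding gcomm_def using A_sg by (simp add: subgroup.m_closed)
  qed
  have any_B: "gcomm G x y \<in> B i" if "x \<in> carrier G" "y \<in> B i" for x y i
  proof -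
    have "x \<otimes> y \<otimes> inv x \<in> B i" using B_cc that unfolding ccl_def by blast
    moreover have "inv y \<in> B i" using B_sg that by (simp add: subgroup.m_inv_closed)
    ultimately show ?thesis unfolding gcomm_def using B_sg by (simp add: subgroup.m_closed)
  qed
  have M_A: "gcomm G x y \<in> A (Suc i)" if "x \<in> M" "y \<in> A i" for x y i
  proof (cases i)
    case 0
    have xc: "x \<in> carrier G" "y \<in> carrier G" using that A_c M(1) subgroup.subset by blast+
    have "inv x \<in> M" using M(1) that(1) by (rule subgroup.m_inv_closed)
    then have "y \<otimes> inv x \<otimes> inv y \<in> M" using M(2) xc(2) unfolding ccl_def by blast
    then have "x \<otimes> (y \<otimes> inv x \<otimes> inv y) \<in> M" using M that by (simp add: subgroup.m_closed)
    then show ?thesis using xc 0 by (simp add: A_def gcomm_def m_assoc)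
  next
    case (Suc j)
    have "gcomm G x y \<in> {gcomm G a b | a b. a \<in> M \<and> b \<in> lc G M j}"
      using that Suc by (auto simp: A_def)
    then show ?thesis using Suc by (simp add: A_def cs_alt generate.incl)
  qed
  have N_B: "gcomm G x y \<in> B (Suc i)" if "x \<in> N" "y \<in> B i" for x y i
  proof (cases i)
    case 0
    have xc: "x \<in> carrier G" "y \<in> carrier G" using that B_c N(1) subgroup.subset by blast+
    have "inv x \<in> N" using N(1) that(1) by (rule subgroup.m_inv_closed)
    then have "y \<otimes> inv x \<otimes> inv y \<in> N" using N(2) xc(2) unfolding ccl_def by blast
    then have "x \<otimes> (y \<otimes> inv x \<otimes> inv y) \<in> N" using N that by (simp add: subgroup.m_closed)
    then show ?thesis using xc 0 by (simp add: B_def gcomm_def m_assoc)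
  next
    case (Suc j)
    have "gcomm G x y \<in> {gcomm G a b | a b. a \<in> N \<and> b \<in> lc G N j}"
      using that Suc by (auto simp: B_def)
    then show ?thesis using Suc by (simp add: B_def cs_alt generate.incl)
  qed
  define Tg where "Tg k = (\<Union>i\<in>{..k}. A i \<inter> B (k - i))" for k
  define T where "T k = generate G (Tg k)" for k
  have Tg_c: "Tg k \<subseteq> carrier G" for k using A_c unfolding Tg_def by blast
  have Tg_cc: "ccl G (Tg k)" for k
    unfolding ccl_def
  proof (intro allI impI)
    fix g y assume g: "g \<in> carrier G" and "y \<in> Tg k"
    then obtain i where i: "i \<le> k" "y \<in> A i" "y \<in> B (k - i)" unfolding Tg_def by blast
    have "g \<otimes> y \<otimes> inv g \<in> A i" using A_cc[of i] g i(2) unfolding ccl_def by blast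
    moreover have "g \<otimes> y \<otimes> inv g \<in> B (k - i)" using B_cc[of "k - i"] g i(3) unfolding ccl_def by blast
    ultimately show "g \<otimes> y \<otimes> inv g \<in> Tg k" unfolding Tg_def using i(1) by blast
  qed
  have T_sg: "subgroup (T k) G" for k unfolding T_def using Tg_c generate_is_subgroup by blast
  have T_cc: "ccl G (T k)" for k unfolding T_def using Tg_c Tg_cc generate_ccl by blast
  let ?J = "generate G (M \<union> N)"
  have MN_c: "M \<union> N \<subseteq> carrier G" using M N subgroup.subset by blast
  have gen_step: "gcomm G x y \<in> T (Suc k)" if xJ: "x \<in> ?J" and yT: "y \<in> Tg k" for x y k
  proof -
    obtain i where i: "i \<le> k" "y \<in> A i" "y \<in> B (k - i)" using yT unfolding Tg_def by blast
    have yc: "y \<in> carrier G" using i A_c by blast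
    show ?thesis
    proof (rule gen_first[OF T_sg T_cc yc MN_c _ xJ])
      fix z assume z: "z \<in> M \<union> N"
      then have zc: "z \<in> carrier G" using MN_c by blast
      show "gcomm G z y \<in> T (Suc k)"
      proof (cases "z \<in> M")
        case True
        have "gcomm G z y \<in> A (Suc i) \<inter> B (Suc k - Suc i)"
          using M_A[OF True i(2)] any_B[OF zc i(3)] by simp
        then have "gcomm G z y \<in> Tg (Suc k)" unfolding Tg_def using i(1) by blast
        then show ?thesis unfolding T_def by (rule generate.incl)
      next
        case False
        then have zN: "z \<in> N" using z by blast
        have "Suc k - i = Suc (k - i)" using i(1) by simp
        then have "gcomm G z y \<in> A i \<inter> B (Suc k - i)"
          using N_B[OF zN i(3)] any_A[OF zc i(2)] by simp
        then have "gcomm G z y \<in> Tg (Suc k)" unfolding Tg_def using i(1) by auto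
        then show ?thesis unfolding T_def by (rule generate.incl)
      qed
    qed
  qed
  have step: "gcomm G x y \<in> T (Suc k)" if "x \<in> ?J" "y \<in> T k" for x y k
  proof -
    have xc: "x \<in> carrier G" using that(1) MN_c generate_in_carrier by blast
    show ?thesis
      by (rule gen_second[OF T_sg T_cc xc Tg_c _ that(2)[unfolded T_def]]) (rule gen_step[OF that(1)])
  qed
  have J_sg: "subgroup ?J G" using MN_c generate_is_subgroup by blast
  have lcJ: "lc G ?J k \<subseteq> T (Suc k)" for k
  proof (induction k)
    case 0
    have a: "A 1 \<inter> B (1 - 1) \<subseteq> Tg 1" "A 0 \<inter> B (1 - 0) \<subseteq> Tg 1"
      unfolding Tg_def by (blast, blast)
    have "M \<subseteq> A 1 \<inter> B (1 - 1)" "N \<subseteq> A 0 \<inter> B (1 - 0)" using MN_c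
      by (auto simp: A_def B_def)
    then have "M \<union> N \<subseteq> Tg 1" using a by blast
    then show ?case unfolding T_def by (simp add: mono_generate)
  next
    case (Suc k)
    have "{gcomm G a b | a b. a \<in> ?J \<and> b \<in> lc G ?J k} \<subseteq> T (Suc (Suc k))"
      using Suc step by blast
    then show ?case using generate_subgroup_incl[OF _ T_sg] by (simp add: cs_alt)
  qed
  have Tz: "T (Suc (c + d)) \<subseteq> {\<one>}"
  proof -
    have "Tg (Suc (c + d)) \<subseteq> {\<one>}"
    proof
      fix y assume "y \<in> Tg (Suc (c + d))"
      then obtain i where i: "i \<le> Suc (c + d)" "y \<in> A i" "y \<in> B (Suc (c + d) - i)"
        unfolding Tg_def by blast
      show "y \<in> {\<one>}"
      proof (cases "c < i")
        case True
        then obtain j where j: "i = Suc j" "c \<le> j" by (cases i) auto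
        then show ?thesis using i lc_triv[OF M(1) cM j(2)] by (simp add: A_def)
      next
        case False
        then obtain j where j: "Suc (c + d) - i = Suc j" "d \<le> j" by (intro that[of "c + d - i"]) auto
        then show ?thesis using i lc_triv[OF N(1) dN j(2)] by (simp add: B_def)
      qed
    qed
    then show ?thesis unfolding T_def using generate_subgroup_incl[OF _ triv_subgroup] by blast
  qed
  have "lc G ?J (c + d) = {\<one>}"
    using lcJ[of "c + d"] Tz subgroup.one_closed[OF lc_subgroup[OF J_sg]] by blast
  then show ?thesis by blast
qed


definition Cj :: "'a set \<Rightarrow> 'a set" where
  "Cj S = {g \<otimes> a \<otimes> inv g | g a. g \<in> carrier G \<and> a \<in> S}"

lemma Cj_c: "S \<subseteq> carrier G \<Longrightarrow> Cj S \<subseteq> carrier G"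
  unfolding Cj_def by blast

lemma Cj_cc: "S \<subseteq> carrier G \<Longrightarrow> ccl G (Cj S)"
  unfolding ccl_def
proof (intro allI impI)
  fix g y assume Sc: "S \<subseteq> carrier G" and g: "g \<in> carrier G" and "y \<in> Cj S"
  then obtain h a where ha: "h \<in> carrier G" "a \<in> S" "y = h \<otimes> a \<otimes> inv h" unfolding Cj_def by blast
  show "g \<otimes> y \<otimes> inv g \<in> Cj S"
  proof -
    have "g \<otimes> y \<otimes> inv g = (g \<otimes> h) \<otimes> a \<otimes> inv (g \<otimes> h)"
      using g ha Sc by (auto simp add: gsimps)
    then show ?thesis using g ha unfolding Cj_def by blast
  qed
qed

lemma Cj_sub: "S \<subseteq> carrier G \<Longrightarrow> S \<subseteq> Cj S"
proof
  fix a assume "S \<subseteq> carrier G" "a \<in> S"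
  then have "a = \<one> \<otimes> a \<otimes> inv \<one>" by auto
  then show "a \<in> Cj S" using \<open>a \<in> S\<close> unfolding Cj_def by blast
qed

lemma nil_fin:
  assumes "finite S" "S \<subseteq> carrier G" "\<forall>a\<in>S. \<exists>n. lc G (generate G (Cj {a})) n = {\<one>}"
  shows "\<exists>n. lc G (generate G (Cj S)) n = {\<one>}"
  using assms
proof (induction S rule: finite_induct)
  case empty
  have "Cj {} = {}" unfolding Cj_def by blast
  then show ?case by (auto simp: generate_empty intro: exI[of _ 0])
next
  case (insert a F)
  let ?M = "generate G (Cj {a})"
  let ?N = "generate G (Cj F)"
  have ac: "{a} \<subseteq> carrier G" "F \<subseteq> carrier G" using insert by auto
  have Ms: "subgroup ?M G" "ccl G ?M"
    by (rule generate_is_subgroup[OF Cj_c[OF ac(1)]], rule generate_ccl[OF Cj_c[OF ac(1)] Cj_cc[OF ac(1)]])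
  have Ns: "subgroup ?N G" "ccl G ?N"
    by (rule generate_is_subgroup[OF Cj_c[OF ac(2)]], rule generate_ccl[OF Cj_c[OF ac(2)] Cj_cc[OF ac(2)]])
  obtain c where c: "lc G ?M c = {\<one>}" using insert.prems(2) by auto
  have "\<exists>n. lc G ?N n = {\<one>}" using insert.IH ac(2) insert.prems(2) by auto
  then obtain d where d: "lc G ?N d = {\<one>}" by blast
  have ins: "insert a F \<subseteq> carrier G" using insert by auto
  have eq: "generate G (Cj (insert a F)) = generate G (?M \<union> ?N)"
  proof
    have "Cj (insert a F) \<subseteq> Cj {a} \<union> Cj F" unfolding Cj_def by blast
    also have "\<dots> \<subseteq> ?M \<union> ?N" by (auto intro: generate.incl)
    finally show "generate G (Cj (insert a F)) \<subseteq> generate G (?M \<union> ?N)" by (rule mono_generate)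
  next
    have sg: "subgroup (generate G (Cj (insert a F))) G"
      by (rule generate_is_subgroup[OF Cj_c[OF ins]])
    have "Cj {a} \<subseteq> Cj (insert a F)" "Cj F \<subseteq> Cj (insert a F)" unfolding Cj_def by blast+
    then have "?M \<union> ?N \<subseteq> generate G (Cj (insert a F))" using mono_generate[of "Cj {a}"] mono_generate[of "Cj F"] by (simp only: Un_subset_iff)
    then show "generate G (?M \<union> ?N) \<subseteq> generate G (Cj (insert a F))"
      by (rule generate_subgroup_incl[OF _ sg])
  qed
  show ?case using fitting[OF Ms Ns c d] eq by simp
qed

lemma main_aux:
  assumes fg: "finitely_generated_group G"
    and h: "\<forall>a\<in>carrier G. nilpotent_group (G\<lparr>carrier := normal_closure G a\<rparr>)"
  shows "nilpotent_group G"
proof -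
  obtain S where S: "finite S" "S \<subseteq> carrier G" "generate G S = carrier G"
    using fg unfolding finitely_generated_group_def by blast
  have nc: "normal_closure G a = generate G (Cj {a})" for a
    unfolding normal_closure_def Cj_def by (rule arg_cong[where f="generate G"]) blast
  have "\<exists>n. lc G (generate G (Cj {a})) n = {\<one>}" if "a \<in> S" for a
  proof -
    have ac: "{a} \<subseteq> carrier G" using that S by auto
    have sg: "subgroup (generate G (Cj {a})) G" by (rule generate_is_subgroup[OF Cj_c[OF ac]])
    have "nilpotent_group (G\<lparr>carrier := generate G (Cj {a})\<rparr>)" using h that S nc by auto
    then obtain n where "lower_central (G\<lparr>carrier := generate G (Cj {a})\<rparr>) n = {\<one>}"
      unfolding nilpotent_group_def by auto
    then show ?thesis using lc_consistent[OF sg] by auto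
  qed
  then obtain n where n: "lc G (generate G (Cj S)) n = {\<one>}" using nil_fin[OF S(1,2)] by auto
  have "generate G (Cj S) = carrier G"
  proof
    show "generate G (Cj S) \<subseteq> carrier G" by (rule generate_incl[OF Cj_c[OF S(2)]])
    show "carrier G \<subseteq> generate G (Cj S)" using S(3) mono_generate[OF Cj_sub[OF S(2)]] by simp
  qed
  then have n2: "lc G (carrier G) n = {\<one>}" using n by simp
  have "lower_central G m = lc G (carrier G) m" for m by (induction m) simp_all
  then show ?thesis using n2 is_group unfolding nilpotent_group_def by auto
qed

end

theorem mainTheorem10:
  fixes G :: "('a, 'b) monoid_scheme"
  assumes "group G"
    and "finitely_generated_group G"
    and "\<not> nilpotent_group G"
  shows "\<exists>a \<in> carrier G. \<not> nilpotent_group (G\<lparr>carrier := normal_closure G a\<rparr>)"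
  using group.main_aux[OF assms(1) assms(2)] assms(3) by blast

end
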